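(* Let $A$ be a ring, $\delta=(\delta_1,\ldots,\delta_n)$ an $n$-tuple of pairwise commuting derivations of $A$, $d_i\in\mathbb{N}\cup\{\infty\}$, $I=\{\alpha\in\mathbb{N}^n\mid\alpha_i\le d_i\ \forall i\}$, and let $\{x^{[\alpha]}\mid\alpha\in I\}$ be a $\delta$-descent. Let $\{x'^{[\alpha]}\mid\alpha\in I\}\subseteq A$. The following are equivalent: (1) $\{x'^{[\alpha]}\mid\alpha\in I\}$ is a $\delta$-descent; (2) $x'^{[0]}=1$ and there are elements $\lambda_\gamma\in A^\delta$ ($0\neq\gamma\in I$) such that $x'^{[\alpha]}=x^{[\alpha]}+\sum_{0\neq\beta\le\alpha}\lambda_\beta x^{[\alpha-\beta]}$ for every $0\neq\alpha\in I$; (3) $x'^{[0]}=1$ and there are elements $\mu_\gamma\in A^\delta$ ($0\neq\gamma\in I$) such that $x'^{[\alpha]}=x^{[\alpha]}+\sum_{0\neq\beta\le\alpha}x^{[\alpha-\beta]}\mu_\beta$ for every $0\neq\alpha\in I$.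
   Context: $A^\delta=\bigcap_i\ker\delta_i$; $\beta\le\alpha$ means $\beta_i\le\alpha_i$ for all $i$; $\delta^\alpha=\delta_1^{\alpha_1}\cdots\delta_n^{\alpha_n}$. A family $\{y^{[\alpha]}\mid\alpha\in I\}$ is a $\delta$-descent if $y^{[0]}=1$ and $\delta^\alpha(y^{[\beta]})=y^{[\beta-\alpha]}$ for all $\alpha\in\mathbb{N}^n$, $\beta\in I$, where $y^{[\gamma]}:=0$ for $\gamma\notin\mathbb{N}^n$. *)

theory Defs
  imports Main "HOL-Library.Extended_Nat" "HOL-Library.Function_Algebras"
begin

text \<open>Multi-indices in N^n are functions nat => nat vanishing outside {..<n};
  the order and subtraction on them are the pointwise ones (le_fun, minus_fun).\<close>

definition multi_idx :: "nat \<Rightarrow> (nat \<Rightarrow> nat) set" where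
  "multi_idx n = {\<alpha>. \<forall>i\<ge>n. \<alpha> i = 0}"

definition idx_set :: "nat \<Rightarrow> (nat \<Rightarrow> enat) \<Rightarrow> (nat \<Rightarrow> nat) set" where
  "idx_set n d = {\<alpha> \<in> multi_idx n. \<forall>i<n. enat (\<alpha> i) \<le> d i}"

definition is_derivation :: "('a::ring_1 \<Rightarrow> 'a) \<Rightarrow> bool" where
  "is_derivation D \<longleftrightarrow> (\<forall>a b. D (a + b) = D a + D b) \<and> (\<forall>a b. D (a * b) = D a * b + a * D b)"

definition commuting_derivations :: "nat \<Rightarrow> (nat \<Rightarrow> 'a::ring_1 \<Rightarrow> 'a) \<Rightarrow> bool" where
  "commuting_derivations n \<delta> \<longleftrightarrow> (\<forall>i<n. is_derivation (\<delta> i)) \<and>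
     (\<forall>i<n. \<forall>j<n. \<delta> i \<circ> \<delta> j = \<delta> j \<circ> \<delta> i)"

definition constants :: "nat \<Rightarrow> (nat \<Rightarrow> 'a::ring_1 \<Rightarrow> 'a) \<Rightarrow> 'a set" where
  "constants n \<delta> = {a. \<forall>i<n. \<delta> i a = 0}"

definition delta_pow :: "nat \<Rightarrow> (nat \<Rightarrow> 'a \<Rightarrow> 'a) \<Rightarrow> (nat \<Rightarrow> nat) \<Rightarrow> 'a \<Rightarrow> 'a" where
  "delta_pow n \<delta> \<alpha> = foldr (\<lambda>i f. (\<delta> i ^^ \<alpha> i) \<circ> f) [0..<n] id"

text \<open>y^[gamma] := 0 for gamma not in N^n, i.e. when alpha is not <= beta.\<close>
definition is_descent :: "nat \<Rightarrow> (nat \<Rightarrow> 'a::ring_1 \<Rightarrow> 'a) \<Rightarrow> (nat \<Rightarrow> nat) set \<Rightarrow> ((nat \<Rightarrow> nat) \<Rightarrow> 'a) \<Rightarrow> bool" where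
  "is_descent n \<delta> I y \<longleftrightarrow> y 0 = 1 \<and>
     (\<forall>\<alpha>\<in>multi_idx n. \<forall>\<beta>\<in>I. delta_pow n \<delta> \<alpha> (y \<beta>) = (if \<alpha> \<le> \<beta> then y (\<beta> - \<alpha>) else 0))"

end

theory Submission
  imports Defs
begin

definition ei :: "nat \<Rightarrow> nat \<Rightarrow> nat" where "ei i = (\<lambda>j. if j = i then 1 else 0)"

lemma foldr_ei:
  "distinct xs \<Longrightarrow> foldr (\<lambda>j f. (\<delta> j ^^ ei i j) \<circ> f) xs id = (if i \<in> set xs then \<delta> i else id)"
  by (induction xs) (auto simp: ei_def)

lemma delta_pow_ei: "i < n \<Longrightarrow> delta_pow n \<delta> (ei i) = \<delta> i"
  unfolding delta_pow_def using foldr_ei[of "[0..<n]" i \<delta>] by simp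

definition goodf :: "nat \<Rightarrow> (nat \<Rightarrow> 'a::ring_1 \<Rightarrow> 'a) \<Rightarrow> ('a \<Rightarrow> 'a \<Rightarrow> 'a) \<Rightarrow> ('a \<Rightarrow> 'a) \<Rightarrow> bool" where
 "goodf n \<delta> m f \<longleftrightarrow> (\<forall>a b. f (a+b) = f a + f b) \<and> (\<forall>c\<in>constants n \<delta>. \<forall>y. f (m c y) = m c (f y))"

lemma goodf_id: "goodf n \<delta> m id" by (simp add: goodf_def)
lemma goodf_comp: "goodf n \<delta> m f \<Longrightarrow> goodf n \<delta> m g \<Longrightarrow> goodf n \<delta> m (f \<circ> g)"
  by (simp add: goodf_def)
lemma goodf_pow: "goodf n \<delta> m f \<Longrightarrow> goodf n \<delta> m (f ^^ k)"
  by (induction k) (auto intro: goodf_comp goodf_id)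
lemma goodf_foldr: "(\<forall>j\<in>set xs. goodf n \<delta> m (\<delta> j)) \<Longrightarrow> goodf n \<delta> m (foldr (\<lambda>i f. (\<delta> i ^^ \<alpha> i) \<circ> f) xs id)"
  by (induction xs) (auto intro: goodf_comp goodf_id goodf_pow)
lemma goodf_delta_pow: "\<forall>i<n. goodf n \<delta> m (\<delta> i) \<Longrightarrow> goodf n \<delta> m (delta_pow n \<delta> \<alpha>)"
  unfolding delta_pow_def by (rule goodf_foldr) auto

lemma add_zero: fixes f :: "'a::ring_1 \<Rightarrow> 'a" shows "\<forall>a b. f(a+b) = f a + f b \<Longrightarrow> f 0 = (0::'a::ring_1)"
proof -
  assume h: "\<forall>a b. f(a+b) = f a + f b"
  have "f (0+0) = f 0 + f 0" using h by blast
  thus ?thesis by simp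
qed

lemma add_diff: fixes f :: "'a::ring_1 \<Rightarrow> 'a" shows "\<forall>a b. f(a+b) = f a + f b \<Longrightarrow> f (a - b) = f a - (f b::'a::ring_1)"
proof -
  assume h: "\<forall>a b. f(a+b) = f a + f b"
  have "f a = f ((a - b) + b)" by (simp del: diff_add_cancel)
  also have "\<dots> = f (a-b) + f b" using h by blast
  finally show ?thesis by (simp add: algebra_simps)
qed

lemma add_sum: fixes f :: "'a::ring_1 \<Rightarrow> 'a" shows "\<forall>a b. f(a+b) = f a + f b \<Longrightarrow> f (sum g S) = (\<Sum>s\<in>S. f (g s) :: 'a::ring_1)"
proof (cases "finite S")
  case True
  assume h: "\<forall>a b. f(a+b) = f a + f b"
  show ?thesis using True by (induction S rule: finite_induct) (auto simp: h add_zero[OF h])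
next
  case False
  assume h: "\<forall>a b. f(a+b) = f a + f b"
  thus ?thesis using False add_zero[OF h] by simp
qed

lemma fin_le: "\<alpha> \<in> multi_idx n \<Longrightarrow> finite {\<beta>::nat\<Rightarrow>nat. \<beta> \<le> \<alpha>}"
proof -
  assume a: "\<alpha> \<in> multi_idx n"
  have "{\<beta>::nat\<Rightarrow>nat. \<beta> \<le> \<alpha>} \<subseteq> {f. \<forall>x. (x \<in> {..<n} \<longrightarrow> f x \<in> {..\<Sum>i<n. \<alpha> i}) \<and> (x \<notin> {..<n} \<longrightarrow> f x = 0)}"
  proof (clarsimp simp: le_fun_def)
    fix \<beta> :: "nat \<Rightarrow> nat" and x assume b: "\<forall>x. \<beta> x \<le> \<alpha> x"
    show "(x < n \<longrightarrow> \<beta> x \<le> (\<Sum>i<n. \<alpha> i)) \<and> (\<not> x < n \<longrightarrow> \<beta> x = 0)"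
    proof safe
      assume "x < n"
      hence "\<alpha> x \<le> (\<Sum>i<n. \<alpha> i)" by (intro member_le_sum) auto
      thus "\<beta> x \<le> (\<Sum>i<n. \<alpha> i)" using b[rule_format, of x] by linarith
    next
      assume "\<not> x < n"
      thus "\<beta> x = 0" using a b[rule_format, of x] by (auto simp: multi_idx_def)
    qed
  qed
  moreover have "finite {f::nat\<Rightarrow>nat. \<forall>x. (x \<in> {..<n} \<longrightarrow> f x \<in> {..\<Sum>i<n. \<alpha> i}) \<and> (x \<notin> {..<n} \<longrightarrow> f x = 0)}"
    by (rule finite_set_of_finite_funs) auto
  ultimately show ?thesis by (rule finite_subset)
qed

lemma idx_down: "\<beta> \<in> idx_set n d \<Longrightarrow> \<gamma> \<le> \<beta> \<Longrightarrow> \<gamma> \<in> idx_set n d"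
  unfolding idx_set_def multi_idx_def le_fun_def
  by (auto, metis le_zero_eq, meson enat_ord_simps(1) order_trans)

lemma diff_le: "(\<beta>::nat\<Rightarrow>nat) - \<gamma> \<le> \<beta>"
  by (simp add: le_fun_def)

lemma zero_minus: "(0::nat\<Rightarrow>nat) - \<alpha> = 0"
  by (simp add: fun_eq_iff)


lemma main:
  fixes \<delta> :: "nat \<Rightarrow> 'a::ring_1 \<Rightarrow> 'a" and m :: "'a \<Rightarrow> 'a \<Rightarrow> 'a"
    and x x' :: "(nat \<Rightarrow> nat) \<Rightarrow> 'a"
  assumes gd: "\<forall>i<n. goodf n \<delta> m (\<delta> i)"
    and m0: "\<forall>c. m c 0 = 0" and m1: "\<forall>c. m c 1 = c"
    and xd: "is_descent n \<delta> (idx_set n d) x"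
  shows "is_descent n \<delta> (idx_set n d) x' \<longleftrightarrow> (x' 0 = 1 \<and> (\<exists>lam. (\<forall>\<gamma>\<in>idx_set n d. \<gamma> \<noteq> 0 \<longrightarrow> lam \<gamma> \<in> constants n \<delta>) \<and>
            (\<forall>\<alpha>\<in>idx_set n d. \<alpha> \<noteq> 0 \<longrightarrow> x' \<alpha> = x \<alpha> + (\<Sum>\<beta>\<in>{\<beta>. \<beta> \<noteq> 0 \<and> \<beta> \<le> \<alpha>}. m (lam \<beta>) (x (\<alpha> - \<beta>))))))"
proof -
  define I where "I = idx_set n d"
  define M where "M = multi_idx n"
  have IM: "I \<subseteq> M" by (auto simp: I_def M_def idx_set_def)
  have x0: "x 0 = 1" using xd by (simp add: is_descent_def)
  have xdp: "\<And>\<alpha> \<beta>. \<alpha> \<in> M \<Longrightarrow> \<beta> \<in> I \<Longrightarrow> delta_pow n \<delta> \<alpha> (x \<beta>) = (if \<alpha> \<le> \<beta> then x (\<beta> - \<alpha>) else 0)"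
    using xd by (simp add: is_descent_def I_def M_def)
  have dg: "\<And>\<alpha>. goodf n \<delta> m (delta_pow n \<delta> \<alpha>)" using goodf_delta_pow[OF gd] .
  have dadd: "\<And>\<alpha>. \<forall>a b. delta_pow n \<delta> \<alpha> (a+b) = delta_pow n \<delta> \<alpha> a + delta_pow n \<delta> \<alpha> b"
    using dg by (simp add: goodf_def)
  have dm: "\<And>\<alpha> c y. c \<in> constants n \<delta> \<Longrightarrow> delta_pow n \<delta> \<alpha> (m c y) = m c (delta_pow n \<delta> \<alpha> y)"
    using dg by (simp add: goodf_def)
  have finS: "\<And>\<beta> P. \<beta> \<in> I \<Longrightarrow> finite {\<gamma>. P \<gamma> \<and> \<gamma> \<le> \<beta>}"
  proof -
    fix \<beta> :: "nat\<Rightarrow>nat" and P assume "\<beta> \<in> I"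
    hence "finite {\<gamma>. \<gamma> \<le> \<beta>}" using fin_le IM unfolding M_def by blast
    thus "finite {\<gamma>. P \<gamma> \<and> \<gamma> \<le> \<beta>}" by (rule rev_finite_subset) blast
  qed
  have downI: "\<And>\<beta> \<gamma>. \<beta> \<in> I \<Longrightarrow> \<gamma> \<le> \<beta> \<Longrightarrow> \<gamma> \<in> I" using idx_down I_def by blast
  have S0: "{\<gamma>::nat\<Rightarrow>nat. \<gamma> \<noteq> 0 \<and> \<gamma> \<le> 0} = {}" by (auto simp: antisym)
  show ?thesis unfolding I_def[symmetric]
  proof
    show "is_descent n \<delta> I x' \<Longrightarrow> x' 0 = 1 \<and> (\<exists>lam. (\<forall>\<gamma>\<in>I. \<gamma> \<noteq> 0 \<longrightarrow> lam \<gamma> \<in> constants n \<delta>) \<and>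
            (\<forall>\<alpha>\<in>I. \<alpha> \<noteq> 0 \<longrightarrow> x' \<alpha> = x \<alpha> + (\<Sum>\<beta>\<in>{\<beta>. \<beta> \<noteq> 0 \<and> \<beta> \<le> \<alpha>}. m (lam \<beta>) (x (\<alpha> - \<beta>)))))"
    proof -
      assume x'd: "is_descent n \<delta> I x'"
      have x'0: "x' 0 = 1" using x'd by (simp add: is_descent_def)
      have x'dp: "\<And>\<alpha> \<beta>. \<alpha> \<in> M \<Longrightarrow> \<beta> \<in> I \<Longrightarrow> delta_pow n \<delta> \<alpha> (x' \<beta>) = (if \<alpha> \<le> \<beta> then x' (\<beta> - \<alpha>) else 0)"
        using x'd by (simp add: is_descent_def M_def)
      define R where "R = {(\<beta>::nat\<Rightarrow>nat, \<alpha>). \<beta> < \<alpha> \<and> \<alpha> \<in> M}"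
      have "R \<subseteq> measure (\<lambda>\<alpha>. \<Sum>i<n. \<alpha> i)"
      proof (clarsimp simp: R_def)
        fix \<beta> \<alpha> :: "nat\<Rightarrow>nat" assume lt: "\<beta> < \<alpha>" and aM: "\<alpha> \<in> M"
        have le: "\<forall>i. \<beta> i \<le> \<alpha> i" using lt by (simp add: le_fun_def less_le)
        obtain j where j: "\<beta> j \<noteq> \<alpha> j" using lt by (auto simp: less_le fun_eq_iff)
        have "j < n" using j le[rule_format, of j] aM unfolding M_def multi_idx_def
          by (cases "j < n") auto
        show "(\<Sum>i<n. \<beta> i) < (\<Sum>i<n. \<alpha> i)"
          by (rule sum_strict_mono_ex1) (use le j \<open>j < n\<close> in \<open>auto intro!: bexI[of _ j] simp: order.strict_iff_order\<close>)
      qed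
      hence wfR: "wf R" by (rule wf_subset[rotated]) simp
      define F where "F = (\<lambda>L \<alpha>. x' \<alpha> - x \<alpha> - (\<Sum>\<beta>\<in>{\<beta>. \<beta> \<noteq> 0 \<and> \<beta> < \<alpha>}. m (L \<beta>) (x (\<alpha> - \<beta>))))"
      define L where "L = wfrec R F"
      have eq: "\<And>\<alpha>. \<alpha> \<in> M \<Longrightarrow> L \<alpha> = F L \<alpha>"
      proof -
        fix \<alpha> :: "nat\<Rightarrow>nat" assume aM: "\<alpha> \<in> M"
        have "L \<alpha> = F (cut L R \<alpha>) \<alpha>" unfolding L_def by (rule wfrec[OF wfR])
        also have "\<dots> = F L \<alpha>" unfolding F_def using aM
          by (auto simp: cut_apply R_def intro!: sum.cong)
        finally show "L \<alpha> = F L \<alpha>" .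
      qed
      have fmL: "\<forall>\<alpha>\<in>I. \<alpha> \<noteq> 0 \<longrightarrow> x' \<alpha> = x \<alpha> + (\<Sum>\<beta>\<in>{\<beta>. \<beta> \<noteq> 0 \<and> \<beta> \<le> \<alpha>}. m (L \<beta>) (x (\<alpha> - \<beta>)))"
      proof (intro ballI impI)
        fix \<alpha> assume aI: "\<alpha> \<in> I" and a0: "\<alpha> \<noteq> 0"
        have Seq: "{\<beta>. \<beta> \<noteq> 0 \<and> \<beta> \<le> \<alpha>} = insert \<alpha> {\<beta>. \<beta> \<noteq> 0 \<and> \<beta> < \<alpha>}"
          using a0 by (auto simp: less_le)
        have fin: "finite {\<beta>. \<beta> \<noteq> 0 \<and> \<beta> < \<alpha>}"
          using finS[OF aI, of "\<lambda>\<beta>. \<beta> \<noteq> 0 \<and> \<beta> \<noteq> \<alpha>"] by (simp add: less_le conj_commute conj_left_commute)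
        have "(\<Sum>\<beta>\<in>{\<beta>. \<beta> \<noteq> 0 \<and> \<beta> \<le> \<alpha>}. m (L \<beta>) (x (\<alpha> - \<beta>)))
            = m (L \<alpha>) (x (\<alpha> - \<alpha>)) + (\<Sum>\<beta>\<in>{\<beta>. \<beta> \<noteq> 0 \<and> \<beta> < \<alpha>}. m (L \<beta>) (x (\<alpha> - \<beta>)))"
          unfolding Seq using fin by (subst sum.insert) auto
        also have "\<dots> = L \<alpha> + (\<Sum>\<beta>\<in>{\<beta>. \<beta> \<noteq> 0 \<and> \<beta> < \<alpha>}. m (L \<beta>) (x (\<alpha> - \<beta>)))"
          using x0 m1 by simp
        finally show "x' \<alpha> = x \<alpha> + (\<Sum>\<beta>\<in>{\<beta>. \<beta> \<noteq> 0 \<and> \<beta> \<le> \<alpha>}. m (L \<beta>) (x (\<alpha> - \<beta>)))"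
          using eq[of \<alpha>] aI IM unfolding F_def by auto
      qed
      have "\<alpha> \<in> I \<longrightarrow> \<alpha> \<noteq> 0 \<longrightarrow> L \<alpha> \<in> constants n \<delta>" for \<alpha>
      proof (rule wf_induct[OF wfR, where P="\<lambda>\<alpha>. \<alpha> \<in> I \<longrightarrow> \<alpha> \<noteq> 0 \<longrightarrow> L \<alpha> \<in> constants n \<delta>"])
        fix \<alpha> assume "\<forall>y. (y, \<alpha>) \<in> R \<longrightarrow> y \<in> I \<longrightarrow> y \<noteq> 0 \<longrightarrow> L y \<in> constants n \<delta>"
        hence IH: "\<forall>\<beta>. (\<beta>, \<alpha>) \<in> R \<longrightarrow> \<beta> \<in> I \<longrightarrow> \<beta> \<noteq> 0 \<longrightarrow> L \<beta> \<in> constants n \<delta>" by blast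
        show "\<alpha> \<in> I \<longrightarrow> \<alpha> \<noteq> 0 \<longrightarrow> L \<alpha> \<in> constants n \<delta>"
        proof (intro impI)
        assume aI: "\<alpha> \<in> I" and a0: "\<alpha> \<noteq> 0"
        have aM: "\<alpha> \<in> M" using aI IM by auto
        let ?T = "{\<beta>. \<beta> \<noteq> 0 \<and> \<beta> < \<alpha>}"
        have finT: "finite ?T"
          using finS[OF aI, of "\<lambda>\<beta>. \<beta> \<noteq> 0 \<and> \<beta> \<noteq> \<alpha>"] by (simp add: less_le conj_commute conj_left_commute)
        have TC: "\<And>\<beta>. \<beta> \<in> ?T \<Longrightarrow> L \<beta> \<in> constants n \<delta>"
          using IH aM downI[OF aI] by (auto simp: R_def less_le)
        show "L \<alpha> \<in> constants n \<delta>" unfolding constants_def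
        proof (intro CollectI allI impI)
          fix i assume i: "i < n"
          define e where "e = ei i"
          have eM: "e \<in> M" using i by (simp add: e_def ei_def M_def multi_idx_def)
          have de: "\<delta> i = delta_pow n \<delta> e" unfolding e_def by (rule delta_pow_ei[OF i, symmetric])
          have "\<delta> i (L \<alpha>) = delta_pow n \<delta> e (x' \<alpha>) - delta_pow n \<delta> e (x \<alpha>)
               - (\<Sum>\<beta>\<in>?T. m (L \<beta>) (delta_pow n \<delta> e (x (\<alpha> - \<beta>))))"
            using eq[OF aM] TC
            unfolding de F_def by (simp add: add_diff[OF dadd[of e]] add_sum[OF dadd[of e]])
               (rule sum.cong[OF refl], rule dm, rule TC, simp)
          also have "\<dots> = (if e \<le> \<alpha> then x' (\<alpha> - e) else 0) - (if e \<le> \<alpha> then x (\<alpha> - e) else 0)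
               - (\<Sum>\<beta>\<in>?T. if e \<le> \<alpha> - \<beta> then m (L \<beta>) (x (\<alpha> - \<beta> - e)) else 0)"
            using xdp[OF eM] x'dp[OF eM] aI downI[OF aI] diff_le m0 by (auto intro!: sum.cong)
          also have "\<dots> = (if e \<le> \<alpha> then x' (\<alpha> - e) else 0) - (if e \<le> \<alpha> then x (\<alpha> - e) else 0)
               - (\<Sum>\<beta>\<in>{\<beta>\<in>?T. e \<le> \<alpha> - \<beta>}. m (L \<beta>) (x (\<alpha> - \<beta> - e)))"
            by (simp only: sum.inter_filter[OF finT])
          also have "\<dots> = 0"
          proof (cases "e \<le> \<alpha>")
            case False
            have emp: "{\<beta>\<in>?T. e \<le> \<alpha> - \<beta>} = {}" using False diff_le order_trans by blast
            show ?thesis unfolding emp using False by simp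
          next
            case True
            have ai: "1 \<le> \<alpha> i" using True by (auto simp: le_fun_def e_def ei_def dest: spec[of _ i])
            have seq: "{\<beta>\<in>?T. e \<le> \<alpha> - \<beta>} = {\<beta>. \<beta> \<noteq> 0 \<and> \<beta> \<le> \<alpha> - e}"
            proof (intro set_eqI iffI)
              have ej: "\<And>j. e j \<le> \<alpha> j" using True by (simp add: le_fun_def)
              fix \<beta> :: "nat \<Rightarrow> nat"
              {
                assume "\<beta> \<in> {\<beta>\<in>?T. e \<le> \<alpha> - \<beta>}"
                hence b0: "\<beta> \<noteq> 0" and ble: "\<And>j. \<beta> j \<le> \<alpha> j" and ele: "\<And>j. e j \<le> \<alpha> j - \<beta> j"
                  by (auto simp: less_le le_fun_def)
                have "\<beta> j \<le> \<alpha> j - e j" for j using ble[of j] ele[of j] by linarith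
                thus "\<beta> \<in> {\<beta>. \<beta> \<noteq> 0 \<and> \<beta> \<le> \<alpha> - e}" using b0 by (simp add: le_fun_def)
              next
                assume "\<beta> \<in> {\<beta>. \<beta> \<noteq> 0 \<and> \<beta> \<le> \<alpha> - e}"
                hence b0: "\<beta> \<noteq> 0" and bl: "\<And>j. \<beta> j \<le> \<alpha> j - e j" by (auto simp: le_fun_def)
                have ble: "\<beta> \<le> \<alpha>" using bl by (simp add: le_fun_def) (meson diff_le_self order_trans)
                have "e i = 1" by (simp add: e_def ei_def)
                hence "\<beta> i < \<alpha> i" using bl[of i] ai by linarith
                hence bne: "\<beta> \<noteq> \<alpha>" by auto
                have "e j \<le> \<alpha> j - \<beta> j" for j using bl[of j] ej[of j] by linarith
                hence "e \<le> \<alpha> - \<beta>" by (simp add: le_fun_def)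
                thus "\<beta> \<in> {\<beta>\<in>?T. e \<le> \<alpha> - \<beta>}" using b0 ble bne by (simp add: less_le)
              }
            qed
            have deq: "\<And>\<beta>. \<alpha> - \<beta> - e = \<alpha> - e - \<beta>" by (simp add: fun_eq_iff diff_commute add.commute)
            show ?thesis
            proof (cases "\<alpha> - e = 0")
              case True
              thus ?thesis unfolding seq using \<open>e \<le> \<alpha>\<close> S0 x0 x'0 by simp
            next
              case False
              have "\<alpha> - e \<in> I" using downI[OF aI diff_le] .
              thus ?thesis unfolding seq deq using \<open>e \<le> \<alpha>\<close> fmL False by simp
            qed
          qed
          finally show "\<delta> i (L \<alpha>) = 0" .
        qed
      qed
      qed
      thus ?thesis using x'0 fmL by blast
    qed
  next
    assume h: "x' 0 = 1 \<and> (\<exists>lam. (\<forall>\<gamma>\<in>I. \<gamma> \<noteq> 0 \<longrightarrow> lam \<gamma> \<in> constants n \<delta>) \<and>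
            (\<forall>\<alpha>\<in>I. \<alpha> \<noteq> 0 \<longrightarrow> x' \<alpha> = x \<alpha> + (\<Sum>\<beta>\<in>{\<beta>. \<beta> \<noteq> 0 \<and> \<beta> \<le> \<alpha>}. m (lam \<beta>) (x (\<alpha> - \<beta>)))))"
    then obtain lam where x'0: "x' 0 = 1" and lc: "\<forall>\<gamma>\<in>I. \<gamma> \<noteq> 0 \<longrightarrow> lam \<gamma> \<in> constants n \<delta>"
      and fm: "\<forall>\<alpha>\<in>I. \<alpha> \<noteq> 0 \<longrightarrow> x' \<alpha> = x \<alpha> + (\<Sum>\<beta>\<in>{\<beta>. \<beta> \<noteq> 0 \<and> \<beta> \<le> \<alpha>}. m (lam \<beta>) (x (\<alpha> - \<beta>)))"
      by blast
    have "\<forall>\<alpha>\<in>M. \<forall>\<beta>\<in>I. delta_pow n \<delta> \<alpha> (x' \<beta>) = (if \<alpha> \<le> \<beta> then x' (\<beta> - \<alpha>) else 0)"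
    proof (intro ballI)
      fix \<alpha> \<beta> assume aM: "\<alpha> \<in> M" and bI: "\<beta> \<in> I"
      show "delta_pow n \<delta> \<alpha> (x' \<beta>) = (if \<alpha> \<le> \<beta> then x' (\<beta> - \<alpha>) else 0)"
      proof (cases "\<beta> = 0")
        case True
        have "0 \<in> I" using downI[OF bI] by simp
        thus ?thesis using True xdp[OF aM, of 0] x0 x'0 by (simp add: zero_minus)
      next
        case False
        let ?S = "{\<gamma>. \<gamma> \<noteq> 0 \<and> \<gamma> \<le> \<beta>}"
        have "delta_pow n \<delta> \<alpha> (x' \<beta>) = delta_pow n \<delta> \<alpha> (x \<beta>) + (\<Sum>\<gamma>\<in>?S. m (lam \<gamma>) (delta_pow n \<delta> \<alpha> (x (\<beta> - \<gamma>))))"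
        proof -
          have "x' \<beta> = x \<beta> + (\<Sum>\<gamma>\<in>?S. m (lam \<gamma>) (x (\<beta> - \<gamma>)))" using fm bI False by blast
          hence "delta_pow n \<delta> \<alpha> (x' \<beta>) = delta_pow n \<delta> \<alpha> (x \<beta>) + (\<Sum>\<gamma>\<in>?S. delta_pow n \<delta> \<alpha> (m (lam \<gamma>) (x (\<beta> - \<gamma>))))"
            using dadd[of \<alpha>] add_sum[OF dadd[of \<alpha>]] by simp
          also have "(\<Sum>\<gamma>\<in>?S. delta_pow n \<delta> \<alpha> (m (lam \<gamma>) (x (\<beta> - \<gamma>)))) = (\<Sum>\<gamma>\<in>?S. m (lam \<gamma>) (delta_pow n \<delta> \<alpha> (x (\<beta> - \<gamma>))))"
          proof (rule sum.cong[OF refl], rule dm)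
            fix \<gamma> assume "\<gamma> \<in> ?S"
            thus "lam \<gamma> \<in> constants n \<delta>" using lc downI[OF bI] by auto
          qed
          finally show ?thesis .
        qed
        also have "\<dots> = (if \<alpha> \<le> \<beta> then x (\<beta> - \<alpha>) else 0) + (\<Sum>\<gamma>\<in>?S. if \<alpha> \<le> \<beta> - \<gamma> then m (lam \<gamma>) (x (\<beta> - \<gamma> - \<alpha>)) else 0)"
          using xdp[OF aM] bI downI diff_le m0 by (auto intro!: sum.cong)
        also have "\<dots> = (if \<alpha> \<le> \<beta> then x (\<beta> - \<alpha>) else 0) + (\<Sum>\<gamma>\<in>{\<gamma>\<in>?S. \<alpha> \<le> \<beta> - \<gamma>}. m (lam \<gamma>) (x (\<beta> - \<gamma> - \<alpha>)))"
        proof -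
          have "finite ?S" using finS[OF bI] by simp
          thus ?thesis by (simp only: sum.inter_filter)
        qed
        also have "\<dots> = (if \<alpha> \<le> \<beta> then x' (\<beta> - \<alpha>) else 0)"
        proof (cases "\<alpha> \<le> \<beta>")
          case False
          have emp: "{\<gamma>\<in>?S. \<alpha> \<le> \<beta> - \<gamma>} = {}" using False diff_le order_trans by blast
          show ?thesis unfolding emp using False by simp
        next
          case True
          have seq: "{\<gamma>\<in>?S. \<alpha> \<le> \<beta> - \<gamma>} = {\<gamma>. \<gamma> \<noteq> 0 \<and> \<gamma> \<le> \<beta> - \<alpha>}"
            using True by (auto simp: le_fun_def) (metis le_diff_conv2 add.commute diff_le_self order_trans)+
          have deq: "\<And>\<gamma>. \<beta> - \<gamma> - \<alpha> = \<beta> - \<alpha> - \<gamma>" by (simp add: fun_eq_iff diff_commute add.commute)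
          show ?thesis
          proof (cases "\<beta> - \<alpha> = 0")
            case True
            thus ?thesis unfolding seq using \<open>\<alpha> \<le> \<beta>\<close> S0 x0 x'0 by simp
          next
            case False
            have "\<beta> - \<alpha> \<in> I" using downI[OF bI diff_le] .
            thus ?thesis unfolding seq deq using \<open>\<alpha> \<le> \<beta>\<close> fm False by simp
          qed
        qed
        finally show ?thesis .
      qed
    qed
    thus "is_descent n \<delta> I x'" using x'0 by (simp add: is_descent_def M_def)
  qed
qed


lemma der_props:
  assumes "commuting_derivations n \<delta>"
  shows "\<forall>i<n. goodf n \<delta> (\<lambda>c y. c * y) (\<delta> i)" and "\<forall>i<n. goodf n \<delta> (\<lambda>c y. y * c) (\<delta> i)"
proof -
  have D: "\<And>i. i < n \<Longrightarrow> is_derivation (\<delta> i)" using assms by (simp add: commuting_derivations_def)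
  show "\<forall>i<n. goodf n \<delta> (\<lambda>c y. c * y) (\<delta> i)" "\<forall>i<n. goodf n \<delta> (\<lambda>c y. y * c) (\<delta> i)"
    using D by (auto simp: goodf_def is_derivation_def constants_def)
qed

theorem lemma2p2:
  fixes n :: nat and \<delta> :: "nat \<Rightarrow> 'a::ring_1 \<Rightarrow> 'a" and d :: "nat \<Rightarrow> enat"
    and x x' :: "(nat \<Rightarrow> nat) \<Rightarrow> 'a"
  assumes "commuting_derivations n \<delta>"
    and "is_descent n \<delta> (idx_set n d) x"
  shows "(is_descent n \<delta> (idx_set n d) x'
      \<longleftrightarrow> (x' 0 = 1 \<and> (\<exists>lam. (\<forall>\<gamma>\<in>idx_set n d. \<gamma> \<noteq> 0 \<longrightarrow> lam \<gamma> \<in> constants n \<delta>) \<and>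
            (\<forall>\<alpha>\<in>idx_set n d. \<alpha> \<noteq> 0 \<longrightarrow>
               x' \<alpha> = x \<alpha> + (\<Sum>\<beta>\<in>{\<beta>. \<beta> \<noteq> 0 \<and> \<beta> \<le> \<alpha>}. lam \<beta> * x (\<alpha> - \<beta>))))))
    \<and> (is_descent n \<delta> (idx_set n d) x'
      \<longleftrightarrow> (x' 0 = 1 \<and> (\<exists>\<mu>. (\<forall>\<gamma>\<in>idx_set n d. \<gamma> \<noteq> 0 \<longrightarrow> \<mu> \<gamma> \<in> constants n \<delta>) \<and>
            (\<forall>\<alpha>\<in>idx_set n d. \<alpha> \<noteq> 0 \<longrightarrow>
               x' \<alpha> = x \<alpha> + (\<Sum>\<beta>\<in>{\<beta>. \<beta> \<noteq> 0 \<and> \<beta> \<le> \<alpha>}. x (\<alpha> - \<beta>) * \<mu> \<beta>)))))"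
  proof -
  show ?thesis
    using main[OF der_props(1)[OF assms(1)], of d x x'] main[OF der_props(2)[OF assms(1)], of d x x'] assms(2)
    by simp
qed

end
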